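(* Assume $N\ge1$ relays at (fixed) source–relay distances $d_1,\dots,d_N\in[0,R_{\mathcal D}]$, $\alpha=2$, and the far-destination approximation (every relay–destination distance equals $d$). For a relay at source distance $r$ define its outage probability (averaged over fading) $$O_r(P)=\mathcal{P}\big(x_0+\eta y(x-\epsilon)<\epsilon,\ x>\epsilon\big)+\mathcal{P}\big(x_0<\epsilon,\ x<\epsilon\big),\quad x=\frac{|h|^2}{1+r^2},\ y=\frac{|g|^2}{1+d^2}.$$ Then for all sufficiently large $P$, selecting the relay closest to the source minimizes the outage probability: $O_{\min_j d_j}(P)\le O_{d_i}(P)$ for every $i\in\{1,\dots,N\}$.
   Context: $x_0=|h_d|^2/(1+d^2)$, where $d>0$ is the source–destination distance; $h_d,h,g$ are independent $\mathcal{CN}(0,1)$ fading coefficients. $\tau=2^{2R}-1$ for target rate $R>0$, $\epsilon=\tau/P$ with transmit power $P$, energy harvesting efficiency $\eta\in(0,1]$. A relay decodes iff $x>\epsilon$ and forwards with harvested power $\eta(Px-\tau)$; outage when the combined destination SNR $P(x_0+\eta y(x-\epsilon))$ is below $\tau$ (if the relay cannot decode, outage iff $x_0<\epsilon$). *)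

theory Defs
  imports "HOL-Probability.Probability"
begin

text \<open>Squared magnitude of a CN(0,1) fading coefficient: Exp(1) distributed.\<close>
definition exp1 :: "real measure" where
  "exp1 = density lborel (exponential_density 1)"

text \<open>Joint law of (|h_d|^2, |h|^2, |g|^2): independent Exp(1).\<close>
definition fading :: "(real \<times> real \<times> real) measure" where
  "fading = exp1 \<Otimes>\<^sub>M (exp1 \<Otimes>\<^sub>M exp1)"

text \<open>Outage probability O_r(P) of a relay at source distance r, target rate R,
  harvesting efficiency eta, source-destination (= relay-destination) distance d.\<close>
definition outage :: "real \<Rightarrow> real \<Rightarrow> real \<Rightarrow> real \<Rightarrow> real \<Rightarrow> real" where
  "outage R eta d r P =
    (let tau = 2 powr (2 * R) - 1; eps = tau / P in
       measure fading {(hd, h, g). hd / (1 + d\<^sup>2) + eta * (g / (1 + d\<^sup>2)) * (h / (1 + r\<^sup>2) - eps) < eps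
                                   \<and> h / (1 + r\<^sup>2) > eps}
     + measure fading {(hd, h, g). hd / (1 + d\<^sup>2) < eps \<and> h / (1 + r\<^sup>2) < eps})"

end

theory Submission imports Defs begin
lemma prob_exp1: "prob_space exp1" unfolding exp1_def by (simp add: prob_space_exponential_density)
lemma sets_exp1[measurable_cong]: "sets exp1 = sets borel" unfolding exp1_def by simp
lemma space_exp1[simp]: "space exp1 = UNIV" unfolding exp1_def by simp
lemma prob_fading: "prob_space fading"
  unfolding fading_def using prob_exp1
  by (intro prob_space_pair) (auto simp: pair_prob_space_def pair_sigma_finite_def prob_space_imp_sigma_finite prob_space_pair)
lemma sets_fading[measurable_cong]: "sets fading = sets (borel \<Otimes>\<^sub>M (borel \<Otimes>\<^sub>M borel))"
  unfolding fading_def by (intro sets_pair_measure_cong sets_exp1)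
lemma space_fading[simp]: "space fading = UNIV"
  unfolding fading_def by (simp add: space_pair_measure)
lemma null_exp1: "{..<0} \<union> {a} \<union> {b} \<in> null_sets exp1"
  unfolding exp1_def
  apply (subst null_sets_density_iff)
   apply simp
  using AE_lborel_singleton[of a] AE_lborel_singleton[of b]
  by (auto simp: exponential_density_def elim!: eventually_mono)
lemma null_h: "UNIV \<times> (({..<0} \<union> {a} \<union> {b}) \<times> UNIV) \<in> null_sets fading"
proof -
  interpret p: prob_space "exp1 \<Otimes>\<^sub>M exp1" using prob_fading prob_exp1
    by (intro prob_space_pair) (auto simp: pair_prob_space_def pair_sigma_finite_def prob_space_imp_sigma_finite)
  interpret e: prob_space exp1 by (rule prob_exp1)
  have "({..<0} \<union> {a} \<union> {b}) \<times> UNIV \<in> null_sets (exp1 \<Otimes>\<^sub>M exp1)"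
    using null_exp1 by (intro e.times_in_null_sets1) (auto simp: sets_exp1)
  then show ?thesis unfolding fading_def
    by (intro p.times_in_null_sets2) (auto simp: sets_exp1)
qed
lemma null_g: "UNIV \<times> (UNIV \<times> {..<(0::real)}) \<in> null_sets fading"
proof -
  interpret p: prob_space "exp1 \<Otimes>\<^sub>M exp1" using prob_fading prob_exp1
    by (intro prob_space_pair) (auto simp: pair_prob_space_def pair_sigma_finite_def prob_space_imp_sigma_finite)
  interpret e: prob_space exp1 by (rule prob_exp1)
  have n: "{..<(0::real)} \<in> null_sets exp1"
    unfolding exp1_def by (subst null_sets_density_iff) (auto simp: exponential_density_def)
  have "UNIV \<times> {..<(0::real)} \<in> null_sets (exp1 \<Otimes>\<^sub>M exp1)"
    using n by (intro e.times_in_null_sets2) (auto simp: sets_exp1)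
  then show ?thesis unfolding fading_def
    by (intro p.times_in_null_sets2) (auto simp: sets_exp1)
qed
lemma meas3: "{(hd::real, h::real, g::real). hd / a + e * (g / a) * (h / b - c) < c \<and> h/b > c} \<in> sets fading"
proof -
  have "{(hd::real, h::real, g::real). hd / a + e * (g / a) * (h / b - c) < c \<and> h/b > c}
    = {p \<in> space fading. fst p / a + e * (snd (snd p) / a) * (fst (snd p) / b - c) < c \<and> fst (snd p)/b > c}" by auto
  also have "\<dots> \<in> sets fading" by measurable
  finally show ?thesis .
qed
lemma meas4: "{(hd::real, h::real, g::real). hd / a < c \<and> h/b < c} \<in> sets fading"
proof -
  have "{(hd::real, h::real, g::real). hd / a < c \<and> h/b < c}
    = {p \<in> space fading. fst p / a < c \<and> fst (snd p)/b < c}" by auto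
  also have "\<dots> \<in> sets fading" by measurable
  finally show ?thesis .
qed

lemma pointwise:
  fixes x0 y x1 x2 eps eta :: real
  assumes "0 \<le> eta" "0 \<le> y" "x2 \<le> x1" "x1 \<noteq> eps" "x2 \<noteq> eps"
    and "(x0 + eta * y * (x1 - eps) < eps \<and> x1 > eps) \<or> (x0 < eps \<and> x1 < eps)"
  shows "(x0 + eta * y * (x2 - eps) < eps \<and> x2 > eps) \<or> (x0 < eps \<and> x2 < eps)"
proof (cases "x2 > eps")
  case True
  then have "x1 > eps" using assms by auto
  then have h: "x0 + eta * y * (x1 - eps) < eps" using assms by auto
  have "eta * y * (x2 - eps) \<le> eta * y * (x1 - eps)"
    using assms by (intro mult_left_mono) auto
  then show ?thesis using True h by auto
next
  case False
  then have x2: "x2 < eps" using assms by auto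
  have "x0 < eps"
  proof (cases "x1 > eps")
    case True
    then have "0 \<le> eta * y * (x1 - eps)" using assms by (intro mult_nonneg_nonneg) auto
    moreover have "x0 + eta * y * (x1 - eps) < eps" using assms(6) True by auto
    ultimately show ?thesis by linarith
  next
    case False then show ?thesis using assms by auto
  qed
  then show ?thesis using x2 by auto
qed

lemma outage_mono:
  assumes "0 \<le> eta" "0 \<le> r1" "r1 \<le> r2"
  shows "outage R eta d r1 P \<le> outage R eta d r2 P"
proof -
  interpret prob_space fading by (rule prob_fading)
  define eps where "eps = (2 powr (2 * R) - 1) / P"
  define a where "a = 1 + d\<^sup>2"
  define A where "A b = {(hd::real, h::real, g::real). hd / a + eta * (g / a) * (h / b - eps) < eps \<and> h / b > eps}" for b
  define B where "B b = {(hd::real, h::real, g::real). hd / a < eps \<and> h / b < eps}" for b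
  define b1 where "b1 = 1 + r1\<^sup>2"
  define b2 where "b2 = 1 + r2\<^sup>2"
  have b1: "1 \<le> b1" "b1 \<le> b2" unfolding b1_def b2_def using assms
    by (auto intro: power_mono)
  have a: "0 < a" unfolding a_def by (simp add: add_pos_nonneg)
  have o: "outage R eta d r P = measure fading (A (1 + r\<^sup>2)) + measure fading (B (1 + r\<^sup>2))" for r
    unfolding outage_def A_def B_def eps_def a_def Let_def by simp
  have s: "A b \<in> sets fading" "B b \<in> sets fading" for b
    unfolding A_def B_def by (rule meas3, rule meas4)
  have dj: "A b \<inter> B b = {}" for b unfolding A_def B_def by auto
  have u: "measure fading (A b) + measure fading (B b) = measure fading (A b \<union> B b)" for b
    using finite_measure_Union[OF s(1) s(2) dj] by simp
  define N :: "(real \<times> real \<times> real) set" where "N = UNIV \<times> (({..<0} \<union> {eps*b1} \<union> {eps*b2}) \<times> (UNIV::real set)) \<union> UNIV \<times> (UNIV \<times> {..<(0::real)})"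
  have N: "N \<in> null_sets fading" unfolding N_def using null_h null_g by (rule null_sets.Un)
  have "AE p in fading. p \<notin> N" by (rule AE_not_in[OF N])
  then have "AE p in fading. p \<in> A b1 \<union> B b1 \<longrightarrow> p \<in> A b2 \<union> B b2"
  proof (rule eventually_mono)
    fix p assume pN: "p \<notin> N"
    obtain hd h g where p: "p = (hd, h, g)" by (cases p) auto
    have h: "0 \<le> h" "h \<noteq> eps * b1" "h \<noteq> eps * b2" "0 \<le> g" using pN unfolding N_def p by auto
    have x1: "h / b1 \<noteq> eps" using h b1 by (auto simp: field_simps)
    have x2: "h / b2 \<noteq> eps" using h b1 by (auto simp: field_simps)
    have le: "h / b2 \<le> h / b1" using h b1 by (intro divide_left_mono) auto
    have y: "0 \<le> g / a" using h a by auto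
    show "p \<in> A b1 \<union> B b1 \<longrightarrow> p \<in> A b2 \<union> B b2"
      using pointwise[OF assms(1) y le x1 x2, of "hd / a"]
      unfolding p A_def B_def by (auto simp: mult.assoc)
  qed
  then have "measure fading (A b1 \<union> B b1) \<le> measure fading (A b2 \<union> B b2)"
    by (rule finite_measure_mono_AE) (intro sets.Un s)
  then show ?thesis unfolding o u[symmetric] b1_def b2_def .
qed

theorem proposition1:
  fixes N :: nat and dist :: "nat \<Rightarrow> real" and R_D R eta d :: real
  assumes "N \<ge> 1"
    and "\<forall>i\<in>{1..N}. 0 \<le> dist i \<and> dist i \<le> R_D"
    and "R > 0" and "0 < eta" and "eta \<le> 1" and "d > 0"
  shows "\<forall>\<^sub>F P in at_top. \<forall>i\<in>{1..N}.
           outage R eta d (Min (dist ` {1..N})) P \<le> outage R eta d (dist i) P"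
proof (rule always_eventually, intro allI ballI)
  fix P i assume i: "i \<in> {1..N}"
  have fin: "finite (dist ` {1..N})" "dist ` {1..N} \<noteq> {}" using assms(1) by auto
  have "Min (dist ` {1..N}) \<in> dist ` {1..N}" using Min_in[OF fin] .
  then have "0 \<le> Min (dist ` {1..N})" using assms(2) by auto
  moreover have "Min (dist ` {1..N}) \<le> dist i" using i fin by simp
  ultimately show "outage R eta d (Min (dist ` {1..N})) P \<le> outage R eta d (dist i) P"
    using assms(4) by (intro outage_mono) auto
qed

end
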